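(* Let $H\in(0,1)\setminus\{\tfrac12\}$ and let $X$ be a centered Gaussian process with covariance \[ \mathbb{E}[X_sX_t]=s^{2H}+t^{2H}-\tfrac12\big((s+t)^{2H}+|s-t|^{2H}\big),\qquad s,t\geq0 \] (sub-fractional Brownian motion). Then $X$ is not a Markov process. *)

theory Defs
  imports "HOL-Probability.Probability"
begin

definition nat_filtration :: "'a measure \<Rightarrow> (real \<Rightarrow> 'a \<Rightarrow> real) \<Rightarrow> real \<Rightarrow> 'a measure" where
  "nat_filtration M X s =
     sigma (space M) {X u -` A \<inter> space M | u A. 0 \<le> u \<and> u \<le> s \<and> A \<in> sets (borel :: real measure)}"

definition gen_sigma_at :: "'a measure \<Rightarrow> (real \<Rightarrow> 'a \<Rightarrow> real) \<Rightarrow> real \<Rightarrow> 'a measure" where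
  "gen_sigma_at M X s =
     sigma (space M) {X s -` A \<inter> space M | A. A \<in> sets (borel :: real measure)}"

definition markov_process :: "'a measure \<Rightarrow> (real \<Rightarrow> 'a \<Rightarrow> real) \<Rightarrow> bool" where
  "markov_process M X \<longleftrightarrow>
     (\<forall>s t A. 0 \<le> s \<longrightarrow> s \<le> t \<longrightarrow> A \<in> sets (borel :: real measure) \<longrightarrow>
        (AE \<omega> in M.
          real_cond_exp M (nat_filtration M X s) (indicator (X t -` A \<inter> space M)) \<omega> =
          real_cond_exp M (gen_sigma_at M X s) (indicator (X t -` A \<inter> space M)) \<omega>))"

definition gaussian_process :: "'a measure \<Rightarrow> (real \<Rightarrow> 'a \<Rightarrow> real) \<Rightarrow> bool" where
  "gaussian_process M X \<longleftrightarrow>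
     (\<forall>t\<ge>0. X t \<in> borel_measurable M) \<and>
     (\<forall>T (c :: real \<Rightarrow> real). finite T \<longrightarrow> T \<subseteq> {0..} \<longrightarrow>
        (\<exists>\<mu> \<sigma>. \<sigma> > 0 \<and>
            distributed M lborel (\<lambda>\<omega>. \<Sum>t\<in>T. c t * X t \<omega>) (normal_density \<mu> \<sigma>)) \<or>
        (\<exists>k. AE \<omega> in M. (\<Sum>t\<in>T. c t * X t \<omega>) = k))"

end

theory Submission
  imports Defs "HOL-Real_Asymp.Real_Asymp"
begin



lemma D_second_diff:
  fixes p v :: real
  assumes v: "v > 1"
  shows "\<exists>z>v-1. (v+1) powr p - 2 * v powr p + (v-1) powr p = p * (p-1) * z powr (p-2)"
proof -
  define h where "h x = (x+1) powr p - x powr p" for x :: real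
  have dh: "(h has_real_derivative (p * (x+1) powr (p-1) - p * x powr (p-1))) (at x)" if "x > 0" for x
    unfolding h_def using that
    by (auto intro!: derivative_eq_intros)
  obtain \<xi> where \<xi>: "\<xi> > v-1" "\<xi> < v" "h v - h (v-1) = (v - (v-1)) * (p * (\<xi>+1) powr (p-1) - p * \<xi> powr (p-1))"
    using MVT2[of "v-1" v h "\<lambda>x. p * (x+1) powr (p-1) - p * x powr (p-1)"] dh v by force
  have dg: "((\<lambda>x. x powr (p-1)) has_real_derivative ((p-1) * x powr (p-1-1))) (at x)" if "x > 0" for x
    by (rule has_real_derivative_powr[OF that])
  obtain z where z: "z > \<xi>" "z < \<xi>+1" "(\<xi>+1) powr (p-1) - \<xi> powr (p-1) = ((\<xi>+1) - \<xi>) * ((p-1) * z powr (p-1-1))"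
    using MVT2[of \<xi> "\<xi>+1" "\<lambda>x. x powr (p-1)" "\<lambda>x. (p-1) * x powr (p-1-1)"] dg \<xi> v by force
  have "(v+1) powr p - 2 * v powr p + (v-1) powr p = h v - h (v-1)" unfolding h_def by simp
  also have "\<dots> = p * ((\<xi>+1) powr (p-1) - \<xi> powr (p-1))" using \<xi>(3) by (simp add: algebra_simps)
  also have e: "(\<xi>+1) powr (p-1) - \<xi> powr (p-1) = (p-1) * z powr (p-2)" using z(3) by (simp add: diff_diff_eq)
  have "p * ((\<xi>+1) powr (p-1) - \<xi> powr (p-1)) = p * (p-1) * z powr (p-2)" unfolding e by (simp add: mult.assoc)
  also
  finally show ?thesis using z \<xi> by (intro exI[of _ z]) auto
qed

lemma absh: "\<bar>b - (a + c)/2\<bar> = \<bar>a - 2*b + c\<bar>/(2::real)"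
proof -
  have e: "b - (a + c)/2 = (-(a - 2*b + c))/2" by (simp add: field_simps)
  show ?thesis unfolding e abs_divide abs_minus_cancel by simp
qed

lemma D_lim:
  fixes p :: real
  assumes "0 < p" "p < 2"
  shows "((\<lambda>v. v powr p - ((v+1) powr p + (v-1) powr p)/2) \<longlongrightarrow> 0) at_top"
proof (rule Lim_null_comparison)
  have "filterlim (\<lambda>v::real. v - 1) at_top at_top"
    by real_asymp
  then have L0: "((\<lambda>v::real. (v - 1) powr (p-2)) \<longlongrightarrow> 0) at_top"
    by (rule tendsto_neg_powr[rotated]) (use assms in auto)
  show "((\<lambda>v. p * \<bar>p-1\<bar> / 2 * (v - 1) powr (p-2)) \<longlongrightarrow> 0) at_top"
    using tendsto_mult_left_zero[OF L0, of "p * \<bar>p-1\<bar> / 2"] by (simp add: mult_ac)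
  show "\<forall>\<^sub>F v in at_top. norm (v powr p - ((v+1) powr p + (v-1) powr p)/2) \<le> p * \<bar>p-1\<bar> / 2 * (v - 1) powr (p-2)"
  proof (rule eventually_mono[OF eventually_gt_at_top[of 2]])
    fix v :: real assume v: "v > 2"
    obtain z where z: "z > v-1" "(v+1) powr p - 2 * v powr p + (v-1) powr p = p * (p-1) * z powr (p-2)"
      using D_second_diff[of v p] v by auto
    have "norm (v powr p - ((v+1) powr p + (v-1) powr p)/2) = \<bar>(v+1) powr p - 2 * v powr p + (v-1) powr p\<bar> / 2"
      by (simp only: real_norm_def absh)
    also have "\<dots> = p * \<bar>p-1\<bar> / 2 * z powr (p-2)" using z assms by (simp add: abs_mult)
    also have "\<dots> \<le> p * \<bar>p-1\<bar> / 2 * (v-1) powr (p-2)"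
      using assms z v by (intro mult_left_mono powr_mono2') auto
    finally show "norm (v powr p - ((v+1) powr p + (v-1) powr p)/2) \<le> p * \<bar>p-1\<bar> / 2 * (v - 1) powr (p-2)" .
  qed
qed

definition Kf :: "real \<Rightarrow> real \<Rightarrow> real \<Rightarrow> real" where
  "Kf H s t = s powr (2*H) + t powr (2*H) - (1/2) * ((s + t) powr (2*H) + \<bar>s - t\<bar> powr (2*H))"

lemma K_contra:
  fixes H :: real
  assumes H: "0 < H" "H < 1"
    and id: "\<And>v. v > 1 \<Longrightarrow> Kf H 1 (v^2) * Kf H v v = Kf H 1 v * Kf H v (v^2)"
  shows "H = 1/2"
proof -
  define p where "p = 2*H"
  have p: "0 < p" "p < 2" using H by (auto simp: p_def)
  define D where "D v = v powr p - ((v+1) powr p + (v-1) powr p)/2" for v :: real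
  define c0 where "c0 = 2 - 2 powr p / 2"
  have Kp: "Kf H s t = s powr p + t powr p - (1/2) * ((s + t) powr p + \<bar>s - t\<bar> powr p)" for s t
    by (simp add: Kf_def p_def)
  have K1: "Kf H 1 v = 1 + D v" if "v > 1" for v
    using that by (simp add: Kp D_def abs_if add.commute)
  have Kvv: "Kf H v v = v powr p * c0" if "v > 1" for v
  proof -
    have "(v + v) powr p = 2 powr p * v powr p" using that by (simp add: powr_mult[symmetric])
    then show ?thesis using that p by (simp add: Kp c0_def algebra_simps)
  qed
  have Kvv2: "Kf H v (v^2) = v powr p * (1 + D v)" if "v > 1" for v
  proof -
    have v0: "v > 0" using that by simp
    have a: "(v^2) powr p = v powr p * v powr p" using v0 by (simp add: power2_eq_square powr_mult)
    have b: "(v + v^2) powr p = v powr p * (v+1) powr p"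
    proof -
      have "v + v^2 = v * (v+1)" by (simp add: power2_eq_square algebra_simps)
      then show ?thesis using v0 by (simp add: powr_mult)
    qed
    have c: "\<bar>v - v^2\<bar> powr p = v powr p * (v-1) powr p"
    proof -
      have "\<bar>v - v^2\<bar> = v * (v-1)" using that by (simp add: power2_eq_square algebra_simps abs_if)
      then show ?thesis using that by (simp add: powr_mult)
    qed
    show ?thesis unfolding Kp a b c D_def by (simp add: algebra_simps)
  qed
  have eq: "(1 + D (v^2)) * c0 = (1 + D v)^2" if "v > 1" for v
  proof -
    have v2: "v^2 > 1" using that by (simp add: one_less_power)
    have "(1 + D (v^2)) * (v powr p * c0) = (1 + D v) * (v powr p * (1 + D v))"
      using id[OF that] K1[OF v2] K1[OF that] Kvv[OF that] Kvv2[OF that] by simp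
    then have "((1 + D (v^2)) * c0) * v powr p = ((1 + D v)^2) * v powr p"
      by (simp add: power2_eq_square mult_ac)
    moreover have "v powr p > 0" using that by simp
    ultimately show ?thesis by simp
  qed
  have DL: "(D \<longlongrightarrow> 0) at_top" unfolding D_def using D_lim[OF p] .
  have "filterlim (\<lambda>v::real. v^2) at_top at_top" by real_asymp
  then have DL2: "((\<lambda>v. D (v^2)) \<longlongrightarrow> 0) at_top" using filterlim_compose[OF DL] by blast
  have l1: "((\<lambda>v. (1 + D (v^2)) * c0) \<longlongrightarrow> (1 + 0) * c0) at_top"
    by (intro tendsto_intros DL2)
  have l2: "((\<lambda>v. (1 + D v)^2) \<longlongrightarrow> (1 + 0)^2) at_top"
    by (intro tendsto_intros DL)
  have l2': "((\<lambda>v. (1 + D (v^2)) * c0) \<longlongrightarrow> (1 + 0)^2) at_top"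
    using l2 by (rule Lim_transform_eventually) (auto intro!: eventually_mono[OF eventually_gt_at_top[of 1]] simp: eq)
  have "c0 = 1" using tendsto_unique[OF _ l1 l2'] by simp
  then have "2 powr p = 2 powr 1" unfolding c0_def by simp
  then have "p = 1" using powr_inj[of 2 p 1] by simp
  then show ?thesis unfolding p_def by simp
qed



definition gaussian_rv :: "'a measure \<Rightarrow> ('a \<Rightarrow> real) \<Rightarrow> bool" where
  "gaussian_rv M Z \<longleftrightarrow> (\<exists>\<mu> \<sigma>. \<sigma> > 0 \<and> distributed M lborel Z (normal_density \<mu> \<sigma>)) \<or> (\<exists>k. AE \<omega> in M. Z \<omega> = k)"


lemma (in prob_space) gaussian_integrable:
  assumes Zm: "Z \<in> borel_measurable M" and G: "gaussian_rv M Z"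
  shows "integrable M Z" "integrable M (\<lambda>\<omega>. (Z \<omega>)^2)"
proof -
  have "integrable M Z \<and> integrable M (\<lambda>\<omega>. (Z \<omega>)^2)"
  proof (cases "\<exists>k. AE \<omega> in M. Z \<omega> = k")
    case True
    then obtain k where k: "AE \<omega> in M. Z \<omega> = k" by auto
    have k2: "AE \<omega> in M. (Z \<omega>)^2 = k^2" using k by eventually_elim simp
    have 1: "integrable M Z"
      using integrable_cong_AE[of Z M "\<lambda>_. k"] k Zm by simp
    have 2: "integrable M (\<lambda>\<omega>. (Z \<omega>)^2)"
      using integrable_cong_AE[of "\<lambda>\<omega>. (Z \<omega>)^2" M "\<lambda>_. k^2"] k2 Zm by simp
    show ?thesis using 1 2 by simp
  next
    case False
    then obtain \<mu> \<sigma> where s: "\<sigma> > 0" and D: "distributed M lborel Z (normal_density \<mu> \<sigma>)"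
      using G unfolding gaussian_rv_def by auto
    have i: "integrable M (\<lambda>x. (Z x - \<mu>)^k)" for k
      using distributed_integrable[OF D, of "\<lambda>x. (x - \<mu>)^k"] integrable_normal_moment[OF s, of \<mu> k]
      by simp
    have i1: "integrable M (\<lambda>x. Z x - \<mu>)" using i[of 1] by simp
    have "integrable M (\<lambda>x. (Z x - \<mu>) + \<mu>)" by (rule Bochner_Integration.integrable_add[OF i1]) simp
    then have 1: "integrable M Z" by simp
    have "integrable M (\<lambda>x. (Z x - \<mu>)^2 + 2 * \<mu> * (Z x - \<mu>)^1 + \<mu>^2)" using i[of 1] i[of 2] by simp
    moreover have "(\<lambda>x. (Z x - \<mu>)^2 + 2 * \<mu> * (Z x - \<mu>)^1 + \<mu>^2) = (\<lambda>x. (Z x)^2)"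
      by (auto simp: power2_eq_square algebra_simps)
    ultimately show ?thesis using 1 by simp
  qed
  then show "integrable M Z" "integrable M (\<lambda>\<omega>. (Z \<omega>)^2)" by auto
qed


lemma (in prob_space) gaussian_cos_sin:
  assumes Zm: "Z \<in> borel_measurable M" and G: "gaussian_rv M Z" and E0: "expectation Z = 0"
  shows "expectation (\<lambda>\<omega>. cos (Z \<omega>)) = exp (- expectation (\<lambda>\<omega>. (Z \<omega>)^2) / 2)"
    and "expectation (\<lambda>\<omega>. sin (Z \<omega>)) = 0"
proof -
  have "expectation (\<lambda>\<omega>. cos (Z \<omega>)) = exp (- expectation (\<lambda>\<omega>. (Z \<omega>)^2) / 2) \<and>
        expectation (\<lambda>\<omega>. sin (Z \<omega>)) = 0"
  proof (cases "\<exists>k. AE \<omega> in M. Z \<omega> = k")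
    case True
    then obtain k where k: "AE \<omega> in M. Z \<omega> = k" by auto
    have "expectation Z = expectation (\<lambda>_. k)" by (rule integral_cong_AE) (use k Zm in auto)
    then have k0: "k = 0" using E0 prob_space by simp
    have a: "expectation (\<lambda>\<omega>. cos (Z \<omega>)) = expectation (\<lambda>_. 1)"
      by (rule integral_cong_AE) (use k k0 Zm in auto)
    have b: "expectation (\<lambda>\<omega>. sin (Z \<omega>)) = expectation (\<lambda>_. 0)"
      by (rule integral_cong_AE) (use k k0 Zm in auto)
    have c: "expectation (\<lambda>\<omega>. (Z \<omega>)^2) = expectation (\<lambda>_. 0)"
      by (rule integral_cong_AE) (use k k0 Zm in auto)
    show ?thesis using a b c prob_space by simp
  next
    case False
    then obtain \<mu> \<sigma> where s: "\<sigma> > 0" and D: "distributed M lborel Z (normal_density \<mu> \<sigma>)"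
      using G unfolding gaussian_rv_def by auto
    have mu: "\<mu> = 0" using normal_distributed_expectation[OF s D] E0 by simp
    have var: "expectation (\<lambda>\<omega>. (Z \<omega>)^2) = \<sigma>^2"
      using normal_distributed_variance[OF s D] E0 by simp
    have DW: "distributed M lborel (\<lambda>x. (Z x - \<mu>) / \<sigma>) std_normal_density"
      using normal_standard_normal_convert[OF s] D by simp
    define W where "W x = Z x / \<sigma>" for x
    have DW': "distributed M lborel W std_normal_density" using DW mu unfolding W_def by simp
    have Wm: "W \<in> measurable M lborel" using distributed_measurable[OF DW'] .
    have dW: "distr M lborel W = std_normal_distribution" using distributed_distr_eq_density[OF DW'] .
    have ZW: "Z x = \<sigma> * W x" for x using s unfolding W_def by simp
    have "(CLINT x|M. iexp (Z x)) = (CLINT x|M. iexp (\<sigma> * W x))" by (simp add: ZW)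
    also have "\<dots> = (CLINT x|distr M lborel W. iexp (\<sigma> * x))"
      by (rule integral_distr[OF Wm, symmetric]) measurable
    also have "\<dots> = char std_normal_distribution \<sigma>" unfolding dW char_def by simp
    also have "\<dots> = exp (- (\<sigma>^2) / 2)" by (simp add: char_std_normal_distribution)
    finally have ch: "(CLINT x|M. iexp (Z x)) = complex_of_real (exp (- (\<sigma>^2) / 2))" .
    have ci: "integrable M (\<lambda>x. iexp (Z x))"
      by (rule integrable_const_bound[where B=1]) (use Zm in \<open>auto simp: norm_exp_i_times\<close>)
    have "expectation (\<lambda>x. cos (Z x)) = (LINT x|M. Re (iexp (Z x)))" by (simp add: Re_exp)
    also have "\<dots> = Re (CLINT x|M. iexp (Z x))" by (rule integral_Re[OF ci])
    also have "\<dots> = exp (- (\<sigma>^2) / 2)" unfolding ch by simp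
    finally have 1: "expectation (\<lambda>x. cos (Z x)) = exp (- (\<sigma>^2) / 2)" .
    have "expectation (\<lambda>x. sin (Z x)) = (LINT x|M. Im (iexp (Z x)))" by (simp add: Im_exp)
    also have "\<dots> = Im (CLINT x|M. iexp (Z x))" by (rule integral_Im[OF ci])
    also have "\<dots> = 0" unfolding ch by simp
    finally show ?thesis using 1 var by simp
  qed
  then show "expectation (\<lambda>\<omega>. cos (Z \<omega>)) = exp (- expectation (\<lambda>\<omega>. (Z \<omega>)^2) / 2)"
    and "expectation (\<lambda>\<omega>. sin (Z \<omega>)) = 0" by auto
qed
lemma cos_lip: "\<bar>cos (x::real) - cos y\<bar> \<le> \<bar>x - y\<bar>"
proof -
  have *: "\<bar>cos x - cos y\<bar> \<le> \<bar>x - y\<bar>" if "x < y" for x y :: real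
  proof -
    have "\<exists>z>x. z < y \<and> cos y - cos x = (y - x) * (- sin z)"
      by (rule MVT2) (use that in \<open>auto intro!: derivative_eq_intros\<close>)
    then obtain z where "cos y - cos x = (y - x) * (- sin z)" by blast
    then have "cos x - cos y = (y - x) * sin z" by simp
    then have "\<bar>cos x - cos y\<bar> = \<bar>y - x\<bar> * \<bar>sin z\<bar>" by (simp add: abs_mult)
    also have "\<dots> \<le> \<bar>y - x\<bar> * 1" by (intro mult_left_mono) auto
    finally show ?thesis using that by simp
  qed
  show ?thesis
  proof (cases x y rule: linorder_cases)
    case less then show ?thesis using *[of x y] by simp
  next
    case equal then show ?thesis by simp
  next
    case greater then show ?thesis using *[of y x] by (simp add: abs_minus_commute)
  qed
qed

lemma sin_lip: "\<bar>sin (x::real) - sin y\<bar> \<le> \<bar>x - y\<bar>"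
proof -
  have *: "\<bar>sin x - sin y\<bar> \<le> \<bar>x - y\<bar>" if "x < y" for x y :: real
  proof -
    have "\<exists>z>x. z < y \<and> sin y - sin x = (y - x) * cos z"
      by (rule MVT2) (use that in \<open>auto intro!: derivative_eq_intros\<close>)
    then obtain z where "sin y - sin x = (y - x) * cos z" by blast
    then have "sin x - sin y = - ((y - x) * cos z)" by simp
    then have "\<bar>sin x - sin y\<bar> = \<bar>y - x\<bar> * \<bar>cos z\<bar>" by (simp add: abs_mult)
    also have "\<dots> \<le> \<bar>y - x\<bar> * 1" by (intro mult_left_mono) auto
    finally show ?thesis using that by simp
  qed
  show ?thesis
  proof (cases x y rule: linorder_cases)
    case less then show ?thesis using *[of x y] by simp
  next
    case equal then show ?thesis by simp
  next
    case greater then show ?thesis using *[of y x] by (simp add: abs_minus_commute)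
  qed
qed

definition eseq :: "nat \<Rightarrow> real" where "eseq n = inverse (real (Suc n))"

lemma eseq_pos: "eseq n > 0" by (simp add: eseq_def)

lemma eseq_at0: "filterlim eseq (at 0) sequentially"
  by (rule filterlim_atI) (use LIMSEQ_inverse_real_of_nat in \<open>auto simp: eseq_def[abs_def]\<close>)

lemma diffquot_seq:
  assumes "(f has_real_derivative D) (at 0)"
  shows "(\<lambda>n. (f (eseq n) - f 0) / eseq n) \<longlonglongrightarrow> D"
proof -
  have "((\<lambda>y. (f y - f 0) / (y - 0)) \<longlongrightarrow> D) (at 0)" using assms has_field_derivative_iff by blast
  from filterlim_compose[OF this eseq_at0] show ?thesis by simp
qed

lemma (in prob_space) deriv_trick:
  fixes l a c d :: real
  assumes Um: "U \<in> borel_measurable M" and Ui: "integrable M U" and Ym: "Y \<in> borel_measurable M"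
    and cs: "\<And>m. expectation (\<lambda>\<omega>. cos (m * U \<omega> + l * Y \<omega>)) = exp (- (m^2 * a + 2 * m * l * c + l^2 * d) / 2)"
    and sn: "\<And>m. expectation (\<lambda>\<omega>. sin (m * U \<omega> + l * Y \<omega>)) = 0"
  shows "expectation (\<lambda>\<omega>. U \<omega> * sin (l * Y \<omega>)) = l * c * exp (- (l^2 * d) / 2)"
    and "expectation (\<lambda>\<omega>. U \<omega> * cos (l * Y \<omega>)) = 0"
proof -
  note [measurable] = Um Ym
  define F where "F m = exp (- (m^2 * a + 2 * m * l * c + l^2 * d) / 2)" for m
  have dF: "(F has_real_derivative (- (l * c) * exp (- (l^2 * d) / 2))) (at 0)"
    unfolding F_def by (auto intro!: derivative_eq_intros)
  have ic: "integrable M (\<lambda>\<omega>. cos (m * U \<omega> + l * Y \<omega>))" for m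
    by (rule integrable_const_bound[where B=1]) (use Um Ym in auto)
  have isn: "integrable M (\<lambda>\<omega>. sin (m * U \<omega> + l * Y \<omega>))" for m
    by (rule integrable_const_bound[where B=1]) (use Um Ym in auto)
  define s where "s n \<omega> = (cos (eseq n * U \<omega> + l * Y \<omega>) - cos (0 * U \<omega> + l * Y \<omega>)) / eseq n" for n \<omega>
  define t where "t n \<omega> = (sin (eseq n * U \<omega> + l * Y \<omega>) - sin (0 * U \<omega> + l * Y \<omega>)) / eseq n" for n \<omega>
  have Es: "expectation (s n) = (F (eseq n) - F 0) / eseq n" for n
  proof -
    have "expectation (s n) = expectation (\<lambda>\<omega>. cos (eseq n * U \<omega> + l * Y \<omega>) - cos (0 * U \<omega> + l * Y \<omega>)) / eseq n"
      unfolding s_def by (rule integral_divide_zero)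
    also have "\<dots> = (expectation (\<lambda>\<omega>. cos (eseq n * U \<omega> + l * Y \<omega>)) - expectation (\<lambda>\<omega>. cos (0 * U \<omega> + l * Y \<omega>))) / eseq n"
      by (subst Bochner_Integration.integral_diff[OF ic ic]) (rule refl)
    also have "\<dots> = (F (eseq n) - F 0) / eseq n" unfolding cs F_def by (rule refl)
    finally show ?thesis .
  qed
  have Et: "expectation (t n) = 0" for n
  proof -
    have "expectation (t n) = expectation (\<lambda>\<omega>. sin (eseq n * U \<omega> + l * Y \<omega>) - sin (0 * U \<omega> + l * Y \<omega>)) / eseq n"
      unfolding t_def by (rule integral_divide_zero)
    also have "\<dots> = (expectation (\<lambda>\<omega>. sin (eseq n * U \<omega> + l * Y \<omega>)) - expectation (\<lambda>\<omega>. sin (0 * U \<omega> + l * Y \<omega>))) / eseq n"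
      by (subst Bochner_Integration.integral_diff[OF isn isn]) (rule refl)
    also have "\<dots> = 0" unfolding sn by simp
    finally show ?thesis .
  qed
  have sm: "s n \<in> borel_measurable M" for n unfolding s_def[abs_def] by measurable
  have tm: "t n \<in> borel_measurable M" for n unfolding t_def[abs_def] by measurable
  have bs: "norm (s n \<omega>) \<le> norm (U \<omega>)" for n \<omega>
  proof -
    have "\<bar>cos (eseq n * U \<omega> + l * Y \<omega>) - cos (0 * U \<omega> + l * Y \<omega>)\<bar> \<le> \<bar>eseq n * U \<omega>\<bar>"
      using cos_lip[of "eseq n * U \<omega> + l * Y \<omega>" "0 * U \<omega> + l * Y \<omega>"] by simp
    then show ?thesis using eseq_pos[of n] unfolding s_def by (simp add: abs_mult divide_le_eq mult.commute)
  qed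
  have bt: "norm (t n \<omega>) \<le> norm (U \<omega>)" for n \<omega>
  proof -
    have "\<bar>sin (eseq n * U \<omega> + l * Y \<omega>) - sin (0 * U \<omega> + l * Y \<omega>)\<bar> \<le> \<bar>eseq n * U \<omega>\<bar>"
      using sin_lip[of "eseq n * U \<omega> + l * Y \<omega>" "0 * U \<omega> + l * Y \<omega>"] by simp
    then show ?thesis using eseq_pos[of n] unfolding t_def by (simp add: abs_mult divide_le_eq mult.commute)
  qed
  have ls: "(\<lambda>n. s n \<omega>) \<longlonglongrightarrow> - (U \<omega> * sin (l * Y \<omega>))" for \<omega>
  proof -
    have "((\<lambda>m. cos (m * U \<omega> + l * Y \<omega>)) has_real_derivative - sin (0 * U \<omega> + l * Y \<omega>) * U \<omega>) (at 0)"
      by (auto intro!: derivative_eq_intros)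
    from diffquot_seq[OF this] show ?thesis unfolding s_def by (simp add: mult.commute)
  qed
  have lt: "(\<lambda>n. t n \<omega>) \<longlonglongrightarrow> U \<omega> * cos (l * Y \<omega>)" for \<omega>
  proof -
    have "((\<lambda>m. sin (m * U \<omega> + l * Y \<omega>)) has_real_derivative cos (0 * U \<omega> + l * Y \<omega>) * U \<omega>) (at 0)"
      by (auto intro!: derivative_eq_intros)
    from diffquot_seq[OF this] show ?thesis unfolding t_def by (simp add: mult.commute)
  qed
  have c1: "(\<lambda>n. expectation (s n)) \<longlonglongrightarrow> expectation (\<lambda>\<omega>. - (U \<omega> * sin (l * Y \<omega>)))"
    by (rule integral_dominated_convergence[where w="\<lambda>\<omega>. norm (U \<omega>)"])
       (use Um Ym Ui bs ls sm in auto)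
  have c2: "(\<lambda>n. expectation (s n)) \<longlonglongrightarrow> - (l * c) * exp (- (l^2 * d) / 2)"
    unfolding Es using diffquot_seq[OF dF] .
  have "expectation (\<lambda>\<omega>. - (U \<omega> * sin (l * Y \<omega>))) = - (l * c) * exp (- (l^2 * d) / 2)"
    using LIMSEQ_unique[OF c1 c2] .
  then show "expectation (\<lambda>\<omega>. U \<omega> * sin (l * Y \<omega>)) = l * c * exp (- (l^2 * d) / 2)"
    by simp
  have c3: "(\<lambda>n. expectation (t n)) \<longlonglongrightarrow> expectation (\<lambda>\<omega>. U \<omega> * cos (l * Y \<omega>))"
    by (rule integral_dominated_convergence[where w="\<lambda>\<omega>. norm (U \<omega>)"])
       (use Um Ym Ui bt lt tm in auto)
  then show "expectation (\<lambda>\<omega>. U \<omega> * cos (l * Y \<omega>)) = 0"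
    using LIMSEQ_unique[OF c3[unfolded Et] tendsto_const] by simp
qed



lemma (in prob_space) emeasure_dd:
  assumes gm[measurable]: "g \<in> borel_measurable M" and gi: "integrable M g" and g0: "\<And>\<omega>. g \<omega> \<ge> 0"
    and Ym[measurable]: "Y \<in> borel_measurable M" and B: "B \<in> sets borel"
  shows "emeasure (distr (density M (\<lambda>\<omega>. ennreal (g \<omega>))) borel Y) B = ennreal (expectation (\<lambda>\<omega>. g \<omega> * indicator B (Y \<omega>)))"
proof -
  have "emeasure (distr (density M (\<lambda>\<omega>. ennreal (g \<omega>))) borel Y) B = emeasure (density M (\<lambda>\<omega>. ennreal (g \<omega>))) (Y -` B \<inter> space M)"
    using B by (subst emeasure_distr) auto
  also have "\<dots> = (\<integral>\<^sup>+ \<omega>. ennreal (g \<omega>) * indicator (Y -` B \<inter> space M) \<omega> \<partial>M)"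
    using B by (subst emeasure_density) auto
  also have "\<dots> = (\<integral>\<^sup>+ \<omega>. ennreal (g \<omega> * indicator B (Y \<omega>)) \<partial>M)"
    by (intro nn_integral_cong) (auto split: split_indicator)
  also have "\<dots> = ennreal (expectation (\<lambda>\<omega>. g \<omega> * indicator B (Y \<omega>)))"
  proof (rule nn_integral_eq_integral)
    show "integrable M (\<lambda>\<omega>. g \<omega> * indicator B (Y \<omega>))"
      by (rule Bochner_Integration.integrable_bound[OF gi]) (use B g0 in \<open>auto split: split_indicator\<close>)
  qed (use g0 in \<open>auto split: split_indicator\<close>)
  finally show ?thesis .
qed

lemma (in prob_space) integral_dd:
  fixes h :: "real \<Rightarrow> 'b::{banach, second_countable_topology}"
  assumes gm[measurable]: "g \<in> borel_measurable M" and g0: "\<And>\<omega>. g \<omega> \<ge> 0"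
    and Ym[measurable]: "Y \<in> borel_measurable M" and hm[measurable]: "h \<in> borel_measurable borel"
  shows "integral\<^sup>L (distr (density M (\<lambda>\<omega>. ennreal (g \<omega>))) borel Y) h = (\<integral>\<omega>. g \<omega> *\<^sub>R h (Y \<omega>) \<partial>M)"
proof -
  have "integral\<^sup>L (distr (density M (\<lambda>\<omega>. ennreal (g \<omega>))) borel Y) h = integral\<^sup>L (density M (\<lambda>\<omega>. ennreal (g \<omega>))) (\<lambda>\<omega>. h (Y \<omega>))"
    by (rule integral_distr) auto
  also have "\<dots> = (\<integral>\<omega>. g \<omega> *\<^sub>R h (Y \<omega>) \<partial>M)"
    by (rule integral_density) (use g0 in auto)
  finally show ?thesis .
qed



lemma (in prob_space) ind_to_sin:
  fixes U Y :: "'a \<Rightarrow> real"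
  assumes Um[measurable]: "U \<in> borel_measurable M" and Ui: "integrable M U"
    and Ym[measurable]: "Y \<in> borel_measurable M"
    and ind: "\<And>B. B \<in> sets borel \<Longrightarrow> expectation (\<lambda>\<omega>. U \<omega> * indicator B (Y \<omega>)) = 0"
  shows "expectation (\<lambda>\<omega>. U \<omega> * sin (l * Y \<omega>)) = 0"
proof -
  define Up where "Up \<omega> = max (U \<omega>) 0" for \<omega>
  define Uq where "Uq \<omega> = max (- U \<omega>) 0" for \<omega>
  have Upm[measurable]: "Up \<in> borel_measurable M"
    unfolding Up_def[abs_def] by (intro borel_measurable_max borel_measurable_const Um)
  have Uqm[measurable]: "Uq \<in> borel_measurable M"
    unfolding Uq_def[abs_def] by (intro borel_measurable_max borel_measurable_uminus borel_measurable_const Um)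
  have Upi: "integrable M Up" unfolding Up_def[abs_def] by (intro integrable_max Ui) simp
  have Uqi: "integrable M Uq" unfolding Uq_def[abs_def] by (intro integrable_max integrable_minus Ui) simp
  have U_eq: "U \<omega> = Up \<omega> - Uq \<omega>" for \<omega> unfolding Up_def Uq_def by auto
  have Up0: "\<And>\<omega>. Up \<omega> \<ge> 0" and Uq0: "\<And>\<omega>. Uq \<omega> \<ge> 0" unfolding Up_def Uq_def by auto
  define NP where "NP = distr (density M (\<lambda>\<omega>. ennreal (Up \<omega>))) borel Y"
  define NN where "NN = distr (density M (\<lambda>\<omega>. ennreal (Uq \<omega>))) borel Y"
  have "NP = NN"
  proof (rule measure_eqI)
    show "sets NP = sets NN" unfolding NP_def NN_def by simp
    fix B assume "B \<in> sets NP"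
    then have B: "B \<in> sets borel" unfolding NP_def by simp
    have ip: "integrable M (\<lambda>\<omega>. Up \<omega> * indicator B (Y \<omega>))"
      by (rule Bochner_Integration.integrable_bound[OF Upi]) (use B Up0 in \<open>auto split: split_indicator\<close>)
    have in': "integrable M (\<lambda>\<omega>. Uq \<omega> * indicator B (Y \<omega>))"
      by (rule Bochner_Integration.integrable_bound[OF Uqi]) (use B Uq0 in \<open>auto split: split_indicator\<close>)
    have "0 = expectation (\<lambda>\<omega>. U \<omega> * indicator B (Y \<omega>))" using ind[OF B] by simp
    also have "\<dots> = expectation (\<lambda>\<omega>. Up \<omega> * indicator B (Y \<omega>) - Uq \<omega> * indicator B (Y \<omega>))"
      by (simp add: U_eq left_diff_distrib)
    also have "\<dots> = expectation (\<lambda>\<omega>. Up \<omega> * indicator B (Y \<omega>)) - expectation (\<lambda>\<omega>. Uq \<omega> * indicator B (Y \<omega>))"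
      by (rule Bochner_Integration.integral_diff[OF ip in'])
    finally have "expectation (\<lambda>\<omega>. Up \<omega> * indicator B (Y \<omega>)) = expectation (\<lambda>\<omega>. Uq \<omega> * indicator B (Y \<omega>))"
      by simp
    then show "emeasure NP B = emeasure NN B"
      unfolding NP_def NN_def using emeasure_dd[OF _ Upi Up0 Ym B] emeasure_dd[OF _ Uqi Uq0 Ym B] by simp
  qed
  have sm: "(\<lambda>x. sin (l * x)) \<in> borel_measurable borel" by measurable
  have "expectation (\<lambda>\<omega>. Up \<omega> * sin (l * Y \<omega>)) = integral\<^sup>L NP (\<lambda>x. sin (l * x))"
    unfolding NP_def using integral_dd[OF _ Up0 Ym sm] by simp
  also have "\<dots> = integral\<^sup>L NN (\<lambda>x. sin (l * x))" using \<open>NP = NN\<close> by simp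
  also have "\<dots> = expectation (\<lambda>\<omega>. Uq \<omega> * sin (l * Y \<omega>))"
    unfolding NN_def using integral_dd[OF _ Uq0 Ym sm] by simp
  finally have eq: "expectation (\<lambda>\<omega>. Up \<omega> * sin (l * Y \<omega>)) = expectation (\<lambda>\<omega>. Uq \<omega> * sin (l * Y \<omega>))" .
  have ip: "integrable M (\<lambda>\<omega>. Up \<omega> * sin (l * Y \<omega>))"
    by (rule Bochner_Integration.integrable_bound[OF Upi]) (auto simp: abs_mult intro!: mult_left_le)
  have in': "integrable M (\<lambda>\<omega>. Uq \<omega> * sin (l * Y \<omega>))"
    by (rule Bochner_Integration.integrable_bound[OF Uqi]) (auto simp: abs_mult intro!: mult_left_le)
  have "expectation (\<lambda>\<omega>. U \<omega> * sin (l * Y \<omega>)) = expectation (\<lambda>\<omega>. Up \<omega> * sin (l * Y \<omega>) - Uq \<omega> * sin (l * Y \<omega>))"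
    by (simp add: U_eq left_diff_distrib)
  also have "\<dots> = 0" using Bochner_Integration.integral_diff[OF ip in'] eq by simp
  finally show ?thesis .
qed



lemma (in prob_space) trig_to_ind:
  fixes U Y :: "'a \<Rightarrow> real"
  assumes Um[measurable]: "U \<in> borel_measurable M" and Ui: "integrable M U"
    and Ym[measurable]: "Y \<in> borel_measurable M"
    and cosz: "\<And>l. expectation (\<lambda>\<omega>. U \<omega> * cos (l * Y \<omega>)) = 0"
    and sinz: "\<And>l. expectation (\<lambda>\<omega>. U \<omega> * sin (l * Y \<omega>)) = 0"
    and B: "B \<in> sets borel"
  shows "expectation (\<lambda>\<omega>. U \<omega> * indicator B (Y \<omega>)) = 0"
proof -
  define Up where "Up \<omega> = max (U \<omega>) 0" for \<omega>
  define Uq where "Uq \<omega> = max (- U \<omega>) 0" for \<omega>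
  have Upm[measurable]: "Up \<in> borel_measurable M"
    unfolding Up_def[abs_def] by (intro borel_measurable_max borel_measurable_const Um)
  have Uqm[measurable]: "Uq \<in> borel_measurable M"
    unfolding Uq_def[abs_def] by (intro borel_measurable_max borel_measurable_uminus borel_measurable_const Um)
  have Upi: "integrable M Up" unfolding Up_def[abs_def] by (intro integrable_max Ui) simp
  have Uqi: "integrable M Uq" unfolding Uq_def[abs_def] by (intro integrable_max integrable_minus Ui) simp
  have U_eq: "U \<omega> = Up \<omega> - Uq \<omega>" for \<omega> unfolding Up_def Uq_def by auto
  have Up0: "\<And>\<omega>. Up \<omega> \<ge> 0" and Uq0: "\<And>\<omega>. Uq \<omega> \<ge> 0" unfolding Up_def Uq_def by auto
  have iB: "integrable M (\<lambda>\<omega>. V \<omega> * indicator B (Y \<omega>))" if "integrable M V" "V \<in> borel_measurable M" for V :: "'a \<Rightarrow> real"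
    by (rule Bochner_Integration.integrable_bound[OF that(1)]) (use B that(2) in \<open>auto split: split_indicator\<close>)
  have iT: "integrable M (\<lambda>\<omega>. V \<omega> * f (l * Y \<omega>))"
    if "integrable M V" "V \<in> borel_measurable M" "f \<in> borel_measurable borel" "\<And>x. \<bar>f x\<bar> \<le> 1" for V :: "'a \<Rightarrow> real" and f :: "real \<Rightarrow> real" and l :: real
  proof (rule Bochner_Integration.integrable_bound[OF that(1)])
    show "(\<lambda>\<omega>. V \<omega> * f (l * Y \<omega>)) \<in> borel_measurable M"
      using that(2,3) by measurable
    show "AE x in M. norm (V x * f (l * Y x)) \<le> norm (V x)"
      using that(4) by (auto simp: abs_mult intro!: mult_left_le)
  qed
  have split: "expectation (\<lambda>\<omega>. U \<omega> * g \<omega>) = expectation (\<lambda>\<omega>. Up \<omega> * g \<omega>) - expectation (\<lambda>\<omega>. Uq \<omega> * g \<omega>)"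
    if "integrable M (\<lambda>\<omega>. Up \<omega> * g \<omega>)" "integrable M (\<lambda>\<omega>. Uq \<omega> * g \<omega>)" for g
  proof -
    have "expectation (\<lambda>\<omega>. U \<omega> * g \<omega>) = expectation (\<lambda>\<omega>. Up \<omega> * g \<omega> - Uq \<omega> * g \<omega>)"
      by (simp add: U_eq left_diff_distrib)
    also have "\<dots> = expectation (\<lambda>\<omega>. Up \<omega> * g \<omega>) - expectation (\<lambda>\<omega>. Uq \<omega> * g \<omega>)"
      by (rule Bochner_Integration.integral_diff[OF that])
    finally show ?thesis .
  qed
  have cos_eq: "expectation (\<lambda>\<omega>. Up \<omega> * cos (l * Y \<omega>)) = expectation (\<lambda>\<omega>. Uq \<omega> * cos (l * Y \<omega>))" for l
    using split[OF iT[OF Upi Upm, of cos l] iT[OF Uqi Uqm, of cos l]] cosz[of l] by simp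
  have sin_eq: "expectation (\<lambda>\<omega>. Up \<omega> * sin (l * Y \<omega>)) = expectation (\<lambda>\<omega>. Uq \<omega> * sin (l * Y \<omega>))" for l
    using split[OF iT[OF Upi Upm, of sin l] iT[OF Uqi Uqm, of sin l]] sinz[of l] by simp
  define m where "m = expectation Up"
  have m_eq: "expectation Uq = m" using cos_eq[of 0] unfolding m_def by simp
  have m0: "m \<ge> 0" unfolding m_def using Up0 by (simp add: integral_nonneg)
  show ?thesis
  proof (cases "m = 0")
    case True
    have "AE \<omega> in M. Up \<omega> = 0" using integral_nonneg_eq_0_iff_AE[OF Upi] Up0 True unfolding m_def by simp
    moreover have "AE \<omega> in M. Uq \<omega> = 0" using integral_nonneg_eq_0_iff_AE[OF Uqi] Uq0 True m_eq by simp
    ultimately have "AE \<omega> in M. U \<omega> * indicator B (Y \<omega>) = 0" by eventually_elim (simp add: U_eq)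
    then show ?thesis by (rule integral_eq_zero_AE)
  next
    case False
    then have mpos: "m > 0" using m0 by simp
    define gp where "gp \<omega> = Up \<omega> / m" for \<omega>
    define gq where "gq \<omega> = Uq \<omega> / m" for \<omega>
    have gpm[measurable]: "gp \<in> borel_measurable M" unfolding gp_def[abs_def] by measurable
    have gqm[measurable]: "gq \<in> borel_measurable M" unfolding gq_def[abs_def] by measurable
    have gpi: "integrable M gp" unfolding gp_def[abs_def] using Upi by simp
    have gqi: "integrable M gq" unfolding gq_def[abs_def] using Uqi by simp
    have gp0: "\<And>\<omega>. gp \<omega> \<ge> 0" unfolding gp_def using Up0 mpos by simp
    have gq0: "\<And>\<omega>. gq \<omega> \<ge> 0" unfolding gq_def using Uq0 mpos by simp
    define PP where "PP = distr (density M (\<lambda>\<omega>. ennreal (gp \<omega>))) borel Y"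
    define PQ where "PQ = distr (density M (\<lambda>\<omega>. ennreal (gq \<omega>))) borel Y"
    have Egp: "expectation gp = 1" unfolding gp_def[abs_def] using mpos by (simp add: m_def[symmetric])
    have Egq: "expectation gq = 1" unfolding gq_def[abs_def] using mpos m_eq by simp
    have rdP: "real_distribution PP"
    proof -
      have "emeasure PP (space PP) = ennreal (expectation (\<lambda>\<omega>. gp \<omega> * indicator UNIV (Y \<omega>)))"
        unfolding PP_def using emeasure_dd[OF gpm gpi gp0 Ym, of UNIV] by simp
      also have "\<dots> = 1" using Egp by simp
      finally have "prob_space PP" by (rule prob_spaceI)
      then show ?thesis unfolding real_distribution_def real_distribution_axioms_def PP_def by simp
    qed
    have rdQ: "real_distribution PQ"
    proof -
      have "emeasure PQ (space PQ) = ennreal (expectation (\<lambda>\<omega>. gq \<omega> * indicator UNIV (Y \<omega>)))"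
        unfolding PQ_def using emeasure_dd[OF gqm gqi gq0 Ym, of UNIV] by simp
      also have "\<dots> = 1" using Egq by simp
      finally have "prob_space PQ" by (rule prob_spaceI)
      then show ?thesis unfolding real_distribution_def real_distribution_axioms_def PQ_def by simp
    qed
    have chP: "char PP l = (CLINT \<omega>|M. gp \<omega> *\<^sub>R iexp (l * Y \<omega>))" for l
      unfolding char_def PP_def by (rule integral_dd[OF gpm gp0 Ym]) measurable
    have chQ: "char PQ l = (CLINT \<omega>|M. gq \<omega> *\<^sub>R iexp (l * Y \<omega>))" for l
      unfolding char_def PQ_def by (rule integral_dd[OF gqm gq0 Ym]) measurable
    have cint: "complex_integrable M (\<lambda>\<omega>. g \<omega> *\<^sub>R iexp (l * Y \<omega>))"
      if "integrable M g" "g \<in> borel_measurable M" for g :: "'a \<Rightarrow> real" and l :: real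
    proof (rule Bochner_Integration.integrable_bound[OF that(1)])
      show "(\<lambda>\<omega>. g \<omega> *\<^sub>R iexp (l * Y \<omega>)) \<in> borel_measurable M" using that(2) by measurable
      show "AE x in M. norm (g x *\<^sub>R iexp (l * Y x)) \<le> norm (g x)"
        by (simp add: norm_exp_i_times)
    qed
    have ReI: "Re (CLINT \<omega>|M. g \<omega> *\<^sub>R iexp (l * Y \<omega>)) = expectation (\<lambda>\<omega>. g \<omega> * cos (l * Y \<omega>))"
      if "integrable M g" "g \<in> borel_measurable M" for g :: "'a \<Rightarrow> real" and l :: real
      using integral_Re[OF cint[OF that, of l]] by (simp add: Re_exp)
    have ImI: "Im (CLINT \<omega>|M. g \<omega> *\<^sub>R iexp (l * Y \<omega>)) = expectation (\<lambda>\<omega>. g \<omega> * sin (l * Y \<omega>))"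
      if "integrable M g" "g \<in> borel_measurable M" for g :: "'a \<Rightarrow> real" and l :: real
      using integral_Im[OF cint[OF that, of l]] by (simp add: Im_exp)
    have gpc: "expectation (\<lambda>\<omega>. gp \<omega> * f \<omega>) = expectation (\<lambda>\<omega>. Up \<omega> * f \<omega>) / m" for f :: "'a \<Rightarrow> real"
    proof -
      have "(\<lambda>\<omega>. gp \<omega> * f \<omega>) = (\<lambda>\<omega>. Up \<omega> * f \<omega> / m)" unfolding gp_def by (auto simp: fun_eq_iff)
      then show ?thesis by simp
    qed
    have gqc: "expectation (\<lambda>\<omega>. gq \<omega> * f \<omega>) = expectation (\<lambda>\<omega>. Uq \<omega> * f \<omega>) / m" for f :: "'a \<Rightarrow> real"
    proof -
      have "(\<lambda>\<omega>. gq \<omega> * f \<omega>) = (\<lambda>\<omega>. Uq \<omega> * f \<omega> / m)" unfolding gq_def by (auto simp: fun_eq_iff)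
      then show ?thesis by simp
    qed
    have "char PP = char PQ"
    proof
      fix l
      show "char PP l = char PQ l"
      proof (rule complex_eqI)
        show "Re (char PP l) = Re (char PQ l)"
          unfolding chP chQ ReI[OF gpi gpm] ReI[OF gqi gqm] gpc gqc cos_eq ..
        show "Im (char PP l) = Im (char PQ l)"
          unfolding chP chQ ImI[OF gpi gpm] ImI[OF gqi gqm] gpc gqc sin_eq ..
      qed
    qed
    then have "PP = PQ" using Levy_uniqueness[OF rdP rdQ] by simp
    then have "ennreal (expectation (\<lambda>\<omega>. gp \<omega> * indicator B (Y \<omega>))) = ennreal (expectation (\<lambda>\<omega>. gq \<omega> * indicator B (Y \<omega>)))"
      using emeasure_dd[OF gpm gpi gp0 Ym B] emeasure_dd[OF gqm gqi gq0 Ym B] unfolding PP_def PQ_def by simp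
    moreover have "expectation (\<lambda>\<omega>. gp \<omega> * indicator B (Y \<omega>)) \<ge> 0"
      using gp0 by (intro Bochner_Integration.integral_nonneg) simp
    moreover have "expectation (\<lambda>\<omega>. gq \<omega> * indicator B (Y \<omega>)) \<ge> 0"
      using gq0 by (intro Bochner_Integration.integral_nonneg) simp
    ultimately have "expectation (\<lambda>\<omega>. gp \<omega> * indicator B (Y \<omega>)) = expectation (\<lambda>\<omega>. gq \<omega> * indicator B (Y \<omega>))"
      by simp
    then have "expectation (\<lambda>\<omega>. Up \<omega> * indicator B (Y \<omega>)) = expectation (\<lambda>\<omega>. Uq \<omega> * indicator B (Y \<omega>))"
      unfolding gpc gqc using mpos by simp
    then show ?thesis using split[OF iB[OF Upi Upm] iB[OF Uqi Uqm]] by simp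
  qed
qed



lemma Kvv_pos:
  fixes H v :: real
  assumes "0 < H" "H < 1" "v > 0"
  shows "Kf H v v > 0"
proof -
  have e: "(v + v) powr (2*H) = 2 powr (2*H) * v powr (2*H)"
    using assms by (simp add: powr_mult[symmetric])
  have "2 powr (2*H) < 2 powr 2" using assms by (intro powr_less_mono) auto
  then have "2 powr (2*H) < 4" by simp
  moreover have "v powr (2*H) > 0" using assms by simp
  ultimately have "v powr (2*H) * (2 - 2 powr (2*H) / 2) > 0" by (intro mult_pos_pos) auto
  then show ?thesis using assms unfolding Kf_def e by (simp add: algebra_simps)
qed

lemma gp_comb3:
  assumes gp: "gaussian_process M X" and "0 \<le> r" "0 \<le> s" "0 \<le> t" "r \<noteq> s" "r \<noteq> t" "s \<noteq> t"
  shows "gaussian_rv M (\<lambda>\<omega>. \<alpha> * X r \<omega> + \<beta> * X s \<omega> + \<gamma> * X t \<omega>)"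
proof -
  define c where "c u = (if u = r then \<alpha> else if u = s then \<beta> else \<gamma>)" for u
  have "finite {r,s,t}" "{r,s,t} \<subseteq> {0..}" using assms by auto
  then have *: "(\<exists>\<mu> \<sigma>. \<sigma> > 0 \<and> distributed M lborel (\<lambda>\<omega>. \<Sum>u\<in>{r,s,t}. c u * X u \<omega>) (normal_density \<mu> \<sigma>)) \<or>
        (\<exists>k. AE \<omega> in M. (\<Sum>u\<in>{r,s,t}. c u * X u \<omega>) = k)"
    using gp unfolding gaussian_process_def by blast
  have eq: "(\<Sum>u\<in>{r,s,t}. c u * X u \<omega>) = \<alpha> * X r \<omega> + \<beta> * X s \<omega> + \<gamma> * X t \<omega>" for \<omega>
    using assms by (simp add: c_def)
  from * show ?thesis unfolding gaussian_rv_def eq .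
qed

lemma gp_all:
  assumes gp: "gaussian_process M X"
  shows "\<forall>T (c :: real \<Rightarrow> real). finite T \<longrightarrow> T \<subseteq> {0..} \<longrightarrow>
        (\<exists>\<mu> \<sigma>. \<sigma> > 0 \<and>
            distributed M lborel (\<lambda>\<omega>. \<Sum>t\<in>T. c t * X t \<omega>) (normal_density \<mu> \<sigma>)) \<or>
        (\<exists>k. AE \<omega> in M. (\<Sum>t\<in>T. c t * X t \<omega>) = k)"
  using gp unfolding gaussian_process_def by (rule conjunct2)

lemma gp_comb1:
  assumes gp: "gaussian_process M X" and r: "0 \<le> r"
  shows "gaussian_rv M (X r)"
proof -
  have fin: "finite {r}" and sub: "{r} \<subseteq> {0..}" using r by auto
  have eq: "(\<Sum>u\<in>{r}. (\<lambda>_. 1::real) u * X u \<omega>) = X r \<omega>" for \<omega> by simp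
  from gp_all[OF gp, rule_format, of "{r}" "\<lambda>_. 1", OF fin sub] show ?thesis
    unfolding gaussian_rv_def by (simp only: eq)
qed

lemma (in prob_space) prod_integrable:
  fixes A B :: "'a \<Rightarrow> real"
  assumes [measurable]: "A \<in> borel_measurable M" "B \<in> borel_measurable M"
    and iA: "integrable M (\<lambda>\<omega>. (A \<omega>)^2)" and iB: "integrable M (\<lambda>\<omega>. (B \<omega>)^2)"
  shows "integrable M (\<lambda>\<omega>. A \<omega> * B \<omega>)"
proof (rule Bochner_Integration.integrable_bound[OF Bochner_Integration.integrable_add[OF iA iB]])
  show "(\<lambda>\<omega>. A \<omega> * B \<omega>) \<in> borel_measurable M" by measurable
  show "AE x in M. norm (A x * B x) \<le> norm ((A x)^2 + (B x)^2)"
  proof (intro AE_I2)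
    fix x
    have "0 \<le> (\<bar>A x\<bar> - \<bar>B x\<bar>)^2" by (rule zero_le_power2)
    then have "0 \<le> \<bar>A x\<bar>^2 + \<bar>B x\<bar>^2 - 2 * \<bar>A x\<bar> * \<bar>B x\<bar>" by (simp only: power2_diff)
    then have "2 * \<bar>A x\<bar> * \<bar>B x\<bar> \<le> (A x)^2 + (B x)^2" unfolding power2_abs by linarith
    moreover have "0 \<le> \<bar>A x\<bar> * \<bar>B x\<bar>" by simp
    ultimately have "\<bar>A x\<bar> * \<bar>B x\<bar> \<le> (A x)^2 + (B x)^2" by linarith
    moreover have "norm ((A x)^2 + (B x)^2) = (A x)^2 + (B x)^2"
      unfolding real_norm_def by (rule abs_of_nonneg) (intro add_nonneg_nonneg zero_le_power2)
    ultimately show "norm (A x * B x) \<le> norm ((A x)^2 + (B x)^2)" by (simp add: abs_mult)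
  qed
qed

lemma (in prob_space) quad_expand:
  fixes A B :: "'a \<Rightarrow> real"
  assumes [measurable]: "A \<in> borel_measurable M" "B \<in> borel_measurable M"
    and iA: "integrable M (\<lambda>\<omega>. (A \<omega>)^2)" and iB: "integrable M (\<lambda>\<omega>. (B \<omega>)^2)"
  shows "expectation (\<lambda>\<omega>. (m * A \<omega> + l * B \<omega>)^2) =
    m^2 * expectation (\<lambda>\<omega>. (A \<omega>)^2) + 2 * m * l * expectation (\<lambda>\<omega>. A \<omega> * B \<omega>) + l^2 * expectation (\<lambda>\<omega>. (B \<omega>)^2)"
proof -
  have iAB: "integrable M (\<lambda>\<omega>. A \<omega> * B \<omega>)" by (rule prod_integrable) (use iA iB in auto)
  have "(\<lambda>\<omega>. (m * A \<omega> + l * B \<omega>)^2) = (\<lambda>\<omega>. m^2 * (A \<omega>)^2 + (2 * m * l) * (A \<omega> * B \<omega>) + l^2 * (B \<omega>)^2)"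
    by (auto simp: fun_eq_iff power2_eq_square algebra_simps)
  then show ?thesis using iA iB iAB by simp
qed



lemma gen_sigma_sets:
  assumes Xm: "X s \<in> borel_measurable M"
  shows "sets (gen_sigma_at M X s) = {X s -` A \<inter> space M | A. A \<in> sets borel}"
    and "space (gen_sigma_at M X s) = space M"
proof -
  have sub: "{X s -` A \<inter> space M | A. A \<in> sets borel} \<subseteq> Pow (space M)" by auto
  have "sets (gen_sigma_at M X s) = sigma_sets (space M) {X s -` A \<inter> space M | A. A \<in> sets borel}"
    unfolding gen_sigma_at_def using sets_measure_of[OF sub] by simp
  also have "\<dots> = {X s -` A \<inter> space M | A. A \<in> sigma_sets UNIV (sets borel)}"
    by (rule sigma_sets_vimage_commute[symmetric]) auto
  also have "sigma_sets UNIV (sets borel) = sets (borel :: real measure)"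
    using sets.sigma_sets_eq[of "borel :: real measure"] by simp
  finally show "sets (gen_sigma_at M X s) = {X s -` A \<inter> space M | A. A \<in> sets borel}" .
  show "space (gen_sigma_at M X s) = space M"
    unfolding gen_sigma_at_def using space_measure_of[OF sub] by simp
qed

lemma gen_sigma_subalg:
  assumes Xm: "X s \<in> borel_measurable M"
  shows "subalgebra M (gen_sigma_at M X s)"
  unfolding subalgebra_def gen_sigma_sets[of X s M, OF Xm] using Xm by (auto intro: measurable_sets)

lemma natf_space_sets:
  assumes Xm: "\<And>u. 0 \<le> u \<Longrightarrow> u \<le> s \<Longrightarrow> X u \<in> borel_measurable M"
  shows "space (nat_filtration M X s) = space M"
    and "sets (nat_filtration M X s) = sigma_sets (space M) {X u -` A \<inter> space M | u A. 0 \<le> u \<and> u \<le> s \<and> A \<in> sets borel}"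
proof -
  have sub: "{X u -` A \<inter> space M | u A. 0 \<le> u \<and> u \<le> s \<and> A \<in> sets borel} \<subseteq> Pow (space M)" by auto
  show "space (nat_filtration M X s) = space M"
    unfolding nat_filtration_def using space_measure_of[OF sub] by simp
  show "sets (nat_filtration M X s) = sigma_sets (space M) {X u -` A \<inter> space M | u A. 0 \<le> u \<and> u \<le> s \<and> A \<in> sets borel}"
    unfolding nat_filtration_def using sets_measure_of[OF sub] by simp
qed

lemma natf_subalg:
  assumes Xm: "\<And>u. 0 \<le> u \<Longrightarrow> u \<le> s \<Longrightarrow> X u \<in> borel_measurable M"
  shows "subalgebra M (nat_filtration M X s)"
proof -
  have "sigma_sets (space M) {X u -` A \<inter> space M | u A. 0 \<le> u \<and> u \<le> s \<and> A \<in> sets borel} \<subseteq> sets M"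
    by (rule sets.sigma_sets_subset) (use Xm in \<open>auto intro: measurable_sets\<close>)
  then show ?thesis using natf_space_sets[of s X M, OF Xm] unfolding subalgebra_def by simp
qed

lemma natf_meas:
  assumes Xm: "\<And>u. 0 \<le> u \<Longrightarrow> u \<le> s \<Longrightarrow> X u \<in> borel_measurable M"
    and u: "0 \<le> u" "u \<le> s"
  shows "X u \<in> borel_measurable (nat_filtration M X s)"
proof (rule measurableI)
  fix A :: "real set" assume "A \<in> sets borel"
  then have "X u -` A \<inter> space M \<in> {X u -` A \<inter> space M | u A. 0 \<le> u \<and> u \<le> s \<and> A \<in> sets borel}"
    using u by blast
  then have "X u -` A \<inter> space M \<in> sigma_sets (space M) {X u -` A \<inter> space M | u A. 0 \<le> u \<and> u \<le> s \<and> A \<in> sets borel}"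
    by (rule sigma_sets.Basic)
  moreover have sub: "{X u -` A \<inter> space M | u A. 0 \<le> u \<and> u \<le> s \<and> A \<in> sets borel} \<subseteq> Pow (space M)" by auto
  ultimately show "X u -` A \<inter> space (nat_filtration M X s) \<in> sets (nat_filtration M X s)"
    unfolding nat_filtration_def using sets_measure_of[OF sub] space_measure_of[OF sub] by simp
qed simp

lemma (in prob_space) sfs:
  assumes "subalgebra M F"
  shows "sigma_finite_subalgebra M F"
  by (rule finite_measure_subalgebra_is_sigma_finite)
     (simp add: finite_measure_subalgebra_def finite_measure_subalgebra_axioms_def assms finite_measure_axioms)


theorem mainTheorem5:
  fixes M :: "'a measure" and X :: "real \<Rightarrow> 'a \<Rightarrow> real" and H :: real
  assumes "prob_space M"
    and "0 < H" and "H < 1" and "H \<noteq> 1/2"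
    and "gaussian_process M X"
    and "\<And>t. 0 \<le> t \<Longrightarrow> prob_space.expectation M (X t) = 0"
    and "\<And>s t. 0 \<le> s \<Longrightarrow> 0 \<le> t \<Longrightarrow>
           prob_space.expectation M (\<lambda>\<omega>. X s \<omega> * X t \<omega>) =
             s powr (2*H) + t powr (2*H) - (1/2) * ((s + t) powr (2*H) + \<bar>s - t\<bar> powr (2*H))"
  shows "\<not> markov_process M X"
proof
  assume mk: "markov_process M X"
  interpret prob_space M by (rule assms(1))
  have gp: "gaussian_process M X" by (rule assms(5))
  have Xm: "X u \<in> borel_measurable M" if "0 \<le> u" for u
    using gp that unfolding gaussian_process_def by blast
  have Xi: "integrable M (X u)" if "0 \<le> u" for u
    using gaussian_integrable(1)[OF Xm[OF that] gp_comb1[OF gp that]] .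
  have X2i: "integrable M (\<lambda>\<omega>. (X u \<omega>)^2)" if "0 \<le> u" for u
    using gaussian_integrable(2)[OF Xm[OF that] gp_comb1[OF gp that]] .
  have EX: "expectation (X u) = 0" if "0 \<le> u" for u using assms(6)[OF that] .
  have cov: "expectation (\<lambda>\<omega>. X s \<omega> * X t \<omega>) = Kf H s t" if "0 \<le> s" "0 \<le> t" for s t
    using assms(7)[OF that] unfolding Kf_def .
  have Xpi: "integrable M (\<lambda>\<omega>. X s \<omega> * X t \<omega>)" if "0 \<le> s" "0 \<le> t" for s t
    by (rule prod_integrable[OF Xm[OF that(1)] Xm[OF that(2)] X2i[OF that(1)] X2i[OF that(2)]])
  have key: "Kf H 1 (v^2) * Kf H v v = Kf H 1 v * Kf H v (v^2)" if v1: "v > 1" for v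
  proof -
    define t where "t = v^2"
    have v0: "0 \<le> v" and t0: "0 \<le> t" and vt: "v < t" using v1 unfolding t_def
      by (auto simp: power2_eq_square)
    have o0: "(0::real) \<le> 1" and d1: "(1::real) \<noteq> v" and d2: "(1::real) \<noteq> t" and d3: "v \<noteq> t"
      using v1 vt by auto
    have Kss: "Kf H v v > 0" using Kvv_pos[OF assms(2,3)] v1 by simp
    define b where "b = Kf H 1 v / Kf H v v"
    define U where "U \<omega> = X 1 \<omega> - b * X v \<omega>" for \<omega>
    have Um[measurable]: "U \<in> borel_measurable M" unfolding U_def[abs_def] using Xm[OF o0] Xm[OF v0] by measurable
    have Ui: "integrable M U" unfolding U_def[abs_def] using Xi[OF o0] Xi[OF v0] by simp
    have EU: "expectation U = 0" unfolding U_def[abs_def] using Xi[OF o0] Xi[OF v0] EX[OF o0] EX[OF v0] by simp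
    have U_alt: "U = (\<lambda>\<omega>. 1 * X 1 \<omega> + (- b) * X v \<omega> + 0 * X t \<omega>)" unfolding U_def by (auto simp: fun_eq_iff)
    have GU: "gaussian_rv M U" unfolding U_alt by (rule gp_comb3[OF gp o0 v0 t0 d1 d2 d3])
    have U2i: "integrable M (\<lambda>\<omega>. (U \<omega>)^2)" by (rule gaussian_integrable(2)[OF Um GU])
    have EUX: "expectation (\<lambda>\<omega>. U \<omega> * X w \<omega>) = Kf H 1 w - b * Kf H v w" if "0 \<le> w" for w
    proof -
      have "expectation (\<lambda>\<omega>. U \<omega> * X w \<omega>) = expectation (\<lambda>\<omega>. X 1 \<omega> * X w \<omega> - b * (X v \<omega> * X w \<omega>))"
        unfolding U_def by (simp add: algebra_simps)
      also have "\<dots> = Kf H 1 w - b * Kf H v w"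
        using Xpi[OF o0 that] Xpi[OF v0 that] cov[OF o0 that] cov[OF v0 that] by simp
      finally show ?thesis .
    qed
    have EUXv: "expectation (\<lambda>\<omega>. U \<omega> * X v \<omega>) = 0"
      using EUX[OF v0] Kss unfolding b_def by simp
    have trig: "expectation (\<lambda>\<omega>. U \<omega> * sin (l * X w \<omega>)) = l * expectation (\<lambda>\<omega>. U \<omega> * X w \<omega>) * exp (- (l^2 * expectation (\<lambda>\<omega>. (X w \<omega>)^2)) / 2)
         \<and> expectation (\<lambda>\<omega>. U \<omega> * cos (l * X w \<omega>)) = 0"
      if w: "w = v \<or> w = t" for w l
    proof -
      have w0: "0 \<le> w" using w v0 t0 by auto
      have GZ: "gaussian_rv M (\<lambda>\<omega>. m * U \<omega> + l * X w \<omega>)" for m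
      proof (cases "w = v")
        case True
        have "(\<lambda>\<omega>. m * U \<omega> + l * X w \<omega>) = (\<lambda>\<omega>. m * X 1 \<omega> + (l - m * b) * X v \<omega> + 0 * X t \<omega>)"
          unfolding U_def True by (auto simp: fun_eq_iff algebra_simps)
        then show ?thesis by (simp only: gp_comb3[OF gp o0 v0 t0 d1 d2 d3])
      next
        case False
        then have wt: "w = t" using w by auto
        have "(\<lambda>\<omega>. m * U \<omega> + l * X w \<omega>) = (\<lambda>\<omega>. m * X 1 \<omega> + (- m * b) * X v \<omega> + l * X t \<omega>)"
          unfolding U_def wt by (auto simp: fun_eq_iff algebra_simps)
        then show ?thesis by (simp only: gp_comb3[OF gp o0 v0 t0 d1 d2 d3])
      qed
      have EZ: "expectation (\<lambda>\<omega>. m * U \<omega> + l * X w \<omega>) = 0" for m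
        using Ui Xi[OF w0] EU EX[OF w0] by simp
      have ZM: "(\<lambda>\<omega>. m * U \<omega> + l * X w \<omega>) \<in> borel_measurable M" for m
        using Um Xm[OF w0] by measurable
      have cs: "expectation (\<lambda>\<omega>. cos (m * U \<omega> + l * X w \<omega>)) =
          exp (- (m^2 * expectation (\<lambda>\<omega>. (U \<omega>)^2) + 2 * m * l * expectation (\<lambda>\<omega>. U \<omega> * X w \<omega>) + l^2 * expectation (\<lambda>\<omega>. (X w \<omega>)^2)) / 2)" for m
      proof -
        have q: "expectation (\<lambda>\<omega>. (m * U \<omega> + l * X w \<omega>)^2) = m^2 * expectation (\<lambda>\<omega>. (U \<omega>)^2) + 2 * m * l * expectation (\<lambda>\<omega>. U \<omega> * X w \<omega>) + l^2 * expectation (\<lambda>\<omega>. (X w \<omega>)^2)"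
          by (rule quad_expand[OF Um Xm[OF w0] U2i X2i[OF w0]])
        show ?thesis using gaussian_cos_sin(1)[OF ZM[of m] GZ[of m] EZ[of m]] by (simp only: q)
      qed
      have sn: "expectation (\<lambda>\<omega>. sin (m * U \<omega> + l * X w \<omega>)) = 0" for m
        using gaussian_cos_sin(2)[OF ZM GZ EZ] .
      show ?thesis using deriv_trick[OF Um Ui Xm[OF w0] cs sn] by simp
    qed
    have indv: "expectation (\<lambda>\<omega>. U \<omega> * indicator B (X v \<omega>)) = 0" if B: "B \<in> sets borel" for B
    proof (rule trig_to_ind[OF Um Ui Xm[OF v0] _ _ B])
      show "expectation (\<lambda>\<omega>. U \<omega> * cos (l * X v \<omega>)) = 0" for l using trig[of v l] by simp
      show "expectation (\<lambda>\<omega>. U \<omega> * sin (l * X v \<omega>)) = 0" for l using trig[of v l] EUXv by simp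
    qed
    define G where "G = gen_sigma_at M X v"
    define F where "F = nat_filtration M X v"
    have XmF: "\<And>u. 0 \<le> u \<Longrightarrow> u \<le> v \<Longrightarrow> X u \<in> borel_measurable M" using Xm by simp
    interpret G: sigma_finite_subalgebra M G
      unfolding G_def by (rule sfs[OF gen_sigma_subalg[of X v M, OF Xm[OF v0]]])
    interpret F: sigma_finite_subalgebra M F
      unfolding F_def by (rule sfs[OF natf_subalg[of v X M, OF XmF]])
    have UF: "U \<in> borel_measurable F"
    proof -
      have "X 1 \<in> borel_measurable F" unfolding F_def by (rule natf_meas[of v X M, OF XmF]) (use v1 in auto)
      moreover have "X v \<in> borel_measurable F" unfolding F_def by (rule natf_meas[of v X M, OF XmF]) (use v0 in auto)
      ultimately show ?thesis unfolding U_def[abs_def] by measurable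
    qed
    have ceU: "AE \<omega> in M. real_cond_exp M G U \<omega> = 0"
    proof (rule G.real_cond_exp_charact)
      fix A assume "A \<in> sets G"
      then obtain B where B: "B \<in> sets borel" and A: "A = X v -` B \<inter> space M"
        unfolding G_def gen_sigma_sets(1)[of X v M, OF Xm[OF v0]] by blast
      have "(\<integral>\<omega>\<in>A. U \<omega> \<partial>M) = expectation (\<lambda>\<omega>. U \<omega> * indicator B (X v \<omega>))"
        unfolding set_lebesgue_integral_def A
        by (intro Bochner_Integration.integral_cong) (auto split: split_indicator)
      also have "\<dots> = 0" by (rule indv[OF B])
      finally show "(\<integral>\<omega>\<in>A. U \<omega> \<partial>M) = (\<integral>\<omega>\<in>A. 0 \<partial>M)" by (simp add: set_lebesgue_integral_def)
    qed (use Ui in auto)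
    \<comment> \<open>the Markov property forces orthogonality with functions of X t\<close>
    have indt: "expectation (\<lambda>\<omega>. U \<omega> * indicator A (X t \<omega>)) = 0" if A: "A \<in> sets borel" for A
    proof -
      define I where "I = (indicator (X t -` A \<inter> space M) :: 'a \<Rightarrow> real)"
      have Im[measurable]: "I \<in> borel_measurable M" unfolding I_def using A Xm[OF t0] by measurable
      have I01: "0 \<le> I \<omega> \<and> I \<omega> \<le> 1" for \<omega> unfolding I_def by (auto split: split_indicator)
      have Ii: "integrable M I" by (rule integrable_const_bound[where B=1]) (use I01 in auto)
      have UIi: "integrable M (\<lambda>\<omega>. U \<omega> * I \<omega>)"
        by (rule Bochner_Integration.integrable_bound[OF Ui]) (use I01 in \<open>auto simp: abs_mult intro!: mult_left_le\<close>)
      have mkv: "AE \<omega> in M. real_cond_exp M F I \<omega> = real_cond_exp M G I \<omega>"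
        using mk A v0 vt unfolding markov_process_def F_def G_def I_def by auto
      have cG01: "AE \<omega> in M. 0 \<le> real_cond_exp M G I \<omega> \<and> real_cond_exp M G I \<omega> \<le> 1"
      proof -
        have "AE \<omega> in M. real_cond_exp M G I \<omega> \<ge> 0" by (rule G.real_cond_exp_ge_c[OF Ii]) (use I01 in auto)
        moreover have "AE \<omega> in M. real_cond_exp M G I \<omega> \<le> 1" by (rule G.real_cond_exp_le_c[OF Ii]) (use I01 in auto)
        ultimately show ?thesis by eventually_elim simp
      qed
      have cGUi: "integrable M (\<lambda>\<omega>. real_cond_exp M G I \<omega> * U \<omega>)"
      proof (rule Bochner_Integration.integrable_bound[OF Ui])
        show "(\<lambda>\<omega>. real_cond_exp M G I \<omega> * U \<omega>) \<in> borel_measurable M" by measurable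
        show "AE \<omega> in M. norm (real_cond_exp M G I \<omega> * U \<omega>) \<le> norm (U \<omega>)"
          using cG01 by eventually_elim (auto simp: abs_mult intro!: mult_left_le_one_le)
      qed
      have "expectation (\<lambda>\<omega>. U \<omega> * I \<omega>) = expectation (\<lambda>\<omega>. U \<omega> * real_cond_exp M F I \<omega>)"
        using F.real_cond_exp_intg(2)[OF UIi UF Im] by simp
      also have "\<dots> = expectation (\<lambda>\<omega>. U \<omega> * real_cond_exp M G I \<omega>)"
        by (rule integral_cong_AE) (use mkv in auto)
      also have "\<dots> = expectation (\<lambda>\<omega>. real_cond_exp M G I \<omega> * U \<omega>)" by (simp add: mult.commute)
      also have "\<dots> = expectation (\<lambda>\<omega>. real_cond_exp M G I \<omega> * real_cond_exp M G U \<omega>)"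
        using G.real_cond_exp_intg(2)[OF cGUi _ Um] by simp
      also have "\<dots> = expectation (\<lambda>\<omega>. 0)"
        by (rule integral_cong_AE) (use ceU in auto)
      finally have "expectation (\<lambda>\<omega>. U \<omega> * I \<omega>) = 0" by simp
      moreover have "expectation (\<lambda>\<omega>. U \<omega> * I \<omega>) = expectation (\<lambda>\<omega>. U \<omega> * indicator A (X t \<omega>))"
        unfolding I_def by (intro Bochner_Integration.integral_cong) (auto split: split_indicator)
      ultimately show ?thesis by simp
    qed
    have "expectation (\<lambda>\<omega>. U \<omega> * sin (1 * X t \<omega>)) = 0"
      by (rule ind_to_sin[OF Um Ui Xm[OF t0] indt])
    then have "expectation (\<lambda>\<omega>. U \<omega> * X t \<omega>) = 0" using trig[of t 1] by simp
    then have "Kf H 1 t = b * Kf H v t" using EUX[OF t0] by simp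
    then show ?thesis unfolding t_def[symmetric] b_def using Kss by (simp add: field_simps)
  qed
  have "H = 1/2" by (rule K_contra[OF assms(2,3) key])
  with assms(4) show False by simp
qed


end
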